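(* Let $\Lambda\colon L\times W\to[0,\infty]$ and $\Lambda'\colon L'\times W'\to[0,\infty]$ be Dowker dissimilarities that are $(\alpha,\alpha')$-interleaved (as Dowker dissimilarities). Then the Rips complexes $R\Lambda$ and $R\Lambda'$ are $(\alpha,\alpha')$-interleaved filtered simplicial complexes.
   Context: A Dowker dissimilarity is a function $\Lambda\colon L\times W\to[0,\infty]$ for sets $L,W$. Its Dowker nerve has level $t\in[0,\infty]$ equal to $N\Lambda_t=\{\text{finite }\sigma\subseteq L\mid \exists w\in W \text{ with }\Lambda(l,w)<t\ \forall l\in\sigma\}$. The Rips complex $R\Lambda$ is the filtered simplicial complex with $(R\Lambda)(t)=\{\text{finite }\sigma\subseteq L\mid \text{every }\tau\subseteq\sigma\text{ with }|\tau|\le2\text{ lies in }N\Lambda_t\}$. Let $\alpha,\alpha'\colon[0,\infty]\to[0,\infty]$ be order preserving with $t\le\alpha(t)$, $t\le\alpha'(t)$. An $(\alpha,\alpha')$-interleaving of Dowker dissimilarities $\Lambda,\Lambda'$ is a pair of relations $C\subseteq L\times L'$, $C'\subseteq L'\times L$ such that: (i) for every $t$ and nonempty $\sigma\in N\Lambda_t$, $C(\sigma)=\{l'\mid\exists l\in\sigma,(l,l')\in C\}$ is finite, nonempty and in $N\Lambda'_{\alpha(t)}$; (ii) symmetrically, for nonempty $\tau\in N\Lambda'_t$, $C'(\tau)$ is finite, nonempty and in $N\Lambda_{\alpha'(t)}$; (iii) $\Delta_L\subseteq C'\circ C$ and $\Delta_{L'}\subseteq C\circ C'$ (composition of relations;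 $\Delta$ the diagonal). Filtered simplicial complexes $K,K'$ are $(\alpha,\alpha')$-interleaved if there are continuous maps $F_t\colon|K(t)|\to|K'(\alpha(t))|$, $G_t\colon|K'(t)|\to|K(\alpha'(t))|$ on geometric realizations, commuting up to homotopy with the inclusions of the filtrations, such that $G_{\alpha(t)}\circ F_t$ is homotopic to the inclusion $|K(t)|\to|K(\alpha'(\alpha(t)))|$ and $F_{\alpha'(t)}\circ G_t$ is homotopic to the inclusion $|K'(t)|\to|K'(\alpha(\alpha'(t)))|$. *)

theory Defs
  imports "HOL-Analysis.Analysis"
begin

definition dowker_nerve :: "('l \<Rightarrow> 'w \<Rightarrow> ennreal) \<Rightarrow> ennreal \<Rightarrow> 'l set set" where
  "dowker_nerve \<Lambda> t = {\<sigma>. finite \<sigma> \<and> (\<exists>w. \<forall>l\<in>\<sigma>. \<Lambda> l w < t)}"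

definition rips :: "('l \<Rightarrow> 'w \<Rightarrow> ennreal) \<Rightarrow> ennreal \<Rightarrow> 'l set set" where
  "rips \<Lambda> t = {\<sigma>. finite \<sigma> \<and> (\<forall>\<tau>. \<tau> \<subseteq> \<sigma> \<and> card \<tau> \<le> 2 \<longrightarrow> \<tau> \<in> dowker_nerve \<Lambda> t)}"

definition dowker_interleaving ::
  "('l \<Rightarrow> 'w \<Rightarrow> ennreal) \<Rightarrow> ('l2 \<Rightarrow> 'w2 \<Rightarrow> ennreal) \<Rightarrow> (ennreal \<Rightarrow> ennreal) \<Rightarrow> (ennreal \<Rightarrow> ennreal)
    \<Rightarrow> ('l \<times> 'l2) set \<Rightarrow> ('l2 \<times> 'l) set \<Rightarrow> bool" where
  "dowker_interleaving \<Lambda> \<Lambda>' \<alpha> \<alpha>' C C' \<longleftrightarrow>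
     (\<forall>t \<sigma>. \<sigma> \<in> dowker_nerve \<Lambda> t \<and> \<sigma> \<noteq> {} \<longrightarrow>
        finite (C `` \<sigma>) \<and> C `` \<sigma> \<noteq> {} \<and> C `` \<sigma> \<in> dowker_nerve \<Lambda>' (\<alpha> t)) \<and>
     (\<forall>t \<tau>. \<tau> \<in> dowker_nerve \<Lambda>' t \<and> \<tau> \<noteq> {} \<longrightarrow>
        finite (C' `` \<tau>) \<and> C' `` \<tau> \<noteq> {} \<and> C' `` \<tau> \<in> dowker_nerve \<Lambda> (\<alpha>' t)) \<and>
     Id \<subseteq> C O C' \<and> Id \<subseteq> C' O C"

definition dowker_interleaved ::
  "('l \<Rightarrow> 'w \<Rightarrow> ennreal) \<Rightarrow> ('l2 \<Rightarrow> 'w2 \<Rightarrow> ennreal) \<Rightarrow> (ennreal \<Rightarrow> ennreal) \<Rightarrow> (ennreal \<Rightarrow> ennreal) \<Rightarrow> bool" where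
  "dowker_interleaved \<Lambda> \<Lambda>' \<alpha> \<alpha>' \<longleftrightarrow> (\<exists>C C'. dowker_interleaving \<Lambda> \<Lambda>' \<alpha> \<alpha>' C C')"

text \<open>Points of the realization are barycentric coordinate functions. The closed simplex of
  a finite set sigma carries the subspace topology of the product topology on 'a => real
  (which on functions supported in sigma is the Euclidean topology of R^sigma); the
  realization of K carries the weak (coherent) topology with respect to its closed simplices.\<close>

definition simplex_points :: "'a set \<Rightarrow> ('a \<Rightarrow> real) set" where
  "simplex_points \<sigma> = {x. (\<forall>a. 0 \<le> x a) \<and> (\<forall>a. a \<notin> \<sigma> \<longrightarrow> x a = 0) \<and> sum x \<sigma> = 1}"

definition realization_set :: "'a set set \<Rightarrow> ('a \<Rightarrow> real) set" where
  "realization_set K = (\<Union>\<sigma>\<in>K. simplex_points \<sigma>)"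

definition realization_open :: "'a set set \<Rightarrow> ('a \<Rightarrow> real) set \<Rightarrow> bool" where
  "realization_open K U \<longleftrightarrow> U \<subseteq> realization_set K \<and>
     (\<forall>\<sigma>\<in>K. openin (top_of_set (simplex_points \<sigma>)) (U \<inter> simplex_points \<sigma>))"

lemma istopology_realization_open: "istopology (realization_open K)"
proof -
  have int: "realization_open K (S \<inter> T)" if S: "realization_open K S" and T: "realization_open K T" for S T
  proof -
    have "openin (top_of_set (simplex_points \<sigma>)) (S \<inter> T \<inter> simplex_points \<sigma>)" if s: "\<sigma> \<in> K" for \<sigma>
    proof -
      have a: "openin (top_of_set (simplex_points \<sigma>)) (S \<inter> simplex_points \<sigma>)"
        using S s unfolding realization_open_def by blast
      have b: "openin (top_of_set (simplex_points \<sigma>)) (T \<inter> simplex_points \<sigma>)"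
        using T s unfolding realization_open_def by blast
      have eq: "S \<inter> T \<inter> simplex_points \<sigma> = (S \<inter> simplex_points \<sigma>) \<inter> (T \<inter> simplex_points \<sigma>)"
        by blast
      show ?thesis unfolding eq using a b by (rule openin_Int)
    qed
    moreover have "S \<inter> T \<subseteq> realization_set K" using S unfolding realization_open_def by blast
    ultimately show ?thesis unfolding realization_open_def by blast
  qed
  have un: "realization_open K (\<Union>\<K>)" if H: "\<forall>U\<in>\<K>. realization_open K U" for \<K>
  proof -
    have "openin (top_of_set (simplex_points \<sigma>)) (\<Union>\<K> \<inter> simplex_points \<sigma>)" if s: "\<sigma> \<in> K" for \<sigma>
    proof -
      have "\<forall>V\<in>(\<lambda>U. U \<inter> simplex_points \<sigma>) ` \<K>. openin (top_of_set (simplex_points \<sigma>)) V"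
        using H s unfolding realization_open_def by blast
      then have "openin (top_of_set (simplex_points \<sigma>)) (\<Union>((\<lambda>U. U \<inter> simplex_points \<sigma>) ` \<K>))"
        by (intro openin_Union) blast
      moreover have "\<Union>((\<lambda>U. U \<inter> simplex_points \<sigma>) ` \<K>) = \<Union>\<K> \<inter> simplex_points \<sigma>"
        by blast
      ultimately show ?thesis by simp
    qed
    moreover have "\<Union>\<K> \<subseteq> realization_set K" using H unfolding realization_open_def by blast
    ultimately show ?thesis unfolding realization_open_def by blast
  qed
  show ?thesis unfolding istopology_def using int un by blast
qed

definition realization :: "'a set set \<Rightarrow> ('a \<Rightarrow> real) topology" where
  "realization K = topology (realization_open K)"

lemma openin_realization: "openin (realization K) U \<longleftrightarrow> realization_open K U"
  unfolding realization_def by (simp add: istopology_realization_open)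

text \<open>A filtered simplicial complex is K :: ennreal => 'a set set. The inclusion
  |K(s)| -> |K(t)| of geometric realizations is the identity on coordinate functions.\<close>

definition filtered_interleaved ::
  "(ennreal \<Rightarrow> 'a set set) \<Rightarrow> (ennreal \<Rightarrow> 'b set set) \<Rightarrow> (ennreal \<Rightarrow> ennreal) \<Rightarrow> (ennreal \<Rightarrow> ennreal) \<Rightarrow> bool" where
  "filtered_interleaved K K' \<alpha> \<alpha>' \<longleftrightarrow>
     (\<exists>F G. (\<forall>t. continuous_map (realization (K t)) (realization (K' (\<alpha> t))) (F t)) \<and>
            (\<forall>t. continuous_map (realization (K' t)) (realization (K (\<alpha>' t))) (G t)) \<and>
            (\<forall>s t. s \<le> t \<longrightarrow>
               homotopic_with (\<lambda>_. True) (realization (K s)) (realization (K' (\<alpha> t))) (F t) (F s)) \<and>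
            (\<forall>s t. s \<le> t \<longrightarrow>
               homotopic_with (\<lambda>_. True) (realization (K' s)) (realization (K (\<alpha>' t))) (G t) (G s)) \<and>
            (\<forall>t. homotopic_with (\<lambda>_. True) (realization (K t)) (realization (K (\<alpha>' (\<alpha> t))))
                   (G (\<alpha> t) \<circ> F t) id) \<and>
            (\<forall>t. homotopic_with (\<lambda>_. True) (realization (K' t)) (realization (K' (\<alpha> (\<alpha>' t))))
                   (F (\<alpha>' t) \<circ> G t) id))"

end

theory Submission
  imports Defs
begin


lemma topspace_realization: "topspace (realization K) = realization_set K"
proof -
  have "realization_open K (realization_set K)"
    unfolding realization_open_def
  proof (intro conjI ballI)
    fix \<sigma> assume "\<sigma> \<in> K"
    then have "realization_set K \<inter> simplex_points \<sigma> = simplex_points \<sigma>"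
      unfolding realization_set_def by blast
    then show "openin (top_of_set (simplex_points \<sigma>)) (realization_set K \<inter> simplex_points \<sigma>)"
      by simp
  qed simp
  then have "openin (realization K) (realization_set K)" by (simp add: openin_realization)
  then have "realization_set K \<subseteq> topspace (realization K)" by (rule openin_subset)
  moreover have "topspace (realization K) \<subseteq> realization_set K"
  proof -
    have "openin (realization K) (topspace (realization K))" by simp
    then show ?thesis unfolding openin_realization realization_open_def by blast
  qed
  ultimately show ?thesis by blast
qed

lemma continuous_map_realization:
  assumes img: "\<And>\<sigma>. \<sigma> \<in> K \<Longrightarrow> \<exists>\<tau>\<in>K'. h ` simplex_points \<sigma> \<subseteq> simplex_points \<tau>"
    and cont: "\<And>\<sigma>. \<sigma> \<in> K \<Longrightarrow> continuous_on (simplex_points \<sigma>) h"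
  shows "continuous_map (realization K) (realization K') h"
  unfolding continuous_map_def topspace_realization
proof (intro conjI allI impI)
  show "h \<in> realization_set K \<rightarrow> realization_set K'"
    using img unfolding realization_set_def by blast
  fix U assume "openin (realization K') U"
  then have U: "realization_open K' U" by (simp add: openin_realization)
  show "openin (realization K) {x \<in> realization_set K. h x \<in> U}"
    unfolding openin_realization realization_open_def
  proof (intro conjI ballI)
    fix \<sigma> assume s: "\<sigma> \<in> K"
    obtain \<tau> where t: "\<tau> \<in> K'" "h ` simplex_points \<sigma> \<subseteq> simplex_points \<tau>" using img[OF s] by blast
    have o: "openin (top_of_set (simplex_points \<tau>)) (U \<inter> simplex_points \<tau>)"
      using U t(1) unfolding realization_open_def by blast
    have "openin (top_of_set (simplex_points \<sigma>)) (simplex_points \<sigma> \<inter> h -` (U \<inter> simplex_points \<tau>))"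
      using cont[OF s] o t(2) continuous_on_open_gen by blast
    moreover have "simplex_points \<sigma> \<inter> h -` (U \<inter> simplex_points \<tau>) = {x \<in> realization_set K. h x \<in> U} \<inter> simplex_points \<sigma>"
      using t(2) s unfolding realization_set_def by blast
    ultimately show "openin (top_of_set (simplex_points \<sigma>)) ({x \<in> realization_set K. h x \<in> U} \<inter> simplex_points \<sigma>)"
      by simp
  qed blast
qed

lemma continuous_map_prod_realization:
  assumes img: "\<And>\<sigma>. \<sigma> \<in> K \<Longrightarrow> \<exists>\<tau>\<in>K'. h ` ({0..1::real} \<times> simplex_points \<sigma>) \<subseteq> simplex_points \<tau>"
    and cont: "\<And>\<sigma>. \<sigma> \<in> K \<Longrightarrow> continuous_on ({0..1::real} \<times> simplex_points \<sigma>) h"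
  shows "continuous_map (prod_topology (top_of_set {0..1}) (realization K)) (realization K') h"
  unfolding continuous_map_def topspace_realization topspace_prod_topology
proof (intro conjI allI impI)
  show "h \<in> topspace (top_of_set {0..1}) \<times> realization_set K \<rightarrow> realization_set K'"
    using img unfolding realization_set_def by fastforce
  fix U assume "openin (realization K') U"
  then have U: "realization_open K' U" by (simp add: openin_realization)
  define W where "W = {x \<in> topspace (top_of_set {0..1::real}) \<times> realization_set K. h x \<in> U}"
  have Ws: "openin (prod_topology (top_of_set {0..1}) (top_of_set (simplex_points \<sigma>))) (W \<inter> ({0..1} \<times> simplex_points \<sigma>))"
    if s: "\<sigma> \<in> K" for \<sigma>
  proof -
    obtain \<tau> where t: "\<tau> \<in> K'" "h ` ({0..1} \<times> simplex_points \<sigma>) \<subseteq> simplex_points \<tau>" using img[OF s] by blast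
    have o: "openin (top_of_set (simplex_points \<tau>)) (U \<inter> simplex_points \<tau>)"
      using U t(1) unfolding realization_open_def by blast
    have "openin (top_of_set ({0..1} \<times> simplex_points \<sigma>)) (({0..1} \<times> simplex_points \<sigma>) \<inter> h -` (U \<inter> simplex_points \<tau>))"
      using cont[OF s] o t(2) continuous_on_open_gen by blast
    moreover have "({0..1} \<times> simplex_points \<sigma>) \<inter> h -` (U \<inter> simplex_points \<tau>) = W \<inter> ({0..1} \<times> simplex_points \<sigma>)"
      using t(2) s unfolding realization_set_def W_def by auto
    ultimately show ?thesis by simp
  qed
  show "openin (prod_topology (top_of_set {0..1}) (realization K)) W"
    unfolding openin_prod_topology_alt
  proof (intro allI impI)
    fix s0 x0 assume p: "(s0, x0) \<in> W"
    then obtain \<sigma>0 where s0: "\<sigma>0 \<in> K" "x0 \<in> simplex_points \<sigma>0" and s0I: "s0 \<in> {0..1}"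
      unfolding W_def realization_set_def by auto
    have pW: "(s0, x0) \<in> W \<inter> ({0..1} \<times> simplex_points \<sigma>0)" using p s0 s0I by blast
    obtain A B where AB: "openin (top_of_set {0..1}) A" "openin (top_of_set (simplex_points \<sigma>0)) B"
      "s0 \<in> A" "x0 \<in> B" "A \<times> B \<subseteq> W \<inter> ({0..1} \<times> simplex_points \<sigma>0)"
      using openin_prod_topology_alt[THEN iffD1, rule_format, OF Ws[OF s0(1)] pW] by (elim exE conjE)
    obtain T where T: "open T" "A = {0..1} \<inter> T" using AB(1) by (auto simp: openin_open)
    obtain e where e: "e > 0" "ball s0 e \<subseteq> T" using T AB(3) open_contains_ball by blast
    define N where "N = {0..1::real} \<inter> cball s0 (e/2)"
    define Oo where "Oo = {0..1::real} \<inter> ball s0 (e/2)"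
    define V where "V = {x \<in> realization_set K. N \<times> {x} \<subseteq> W}"
    have NA: "N \<subseteq> A" using e T unfolding N_def by (auto simp: subset_iff)
    have cN: "compactin (top_of_set {0..1}) N"
      unfolding N_def compactin_subtopology by (auto intro: compact_Int_closed)
    have "openin (top_of_set {0..1}) Oo" unfolding Oo_def by (auto simp: openin_open_Int)
    moreover have "openin (realization K) V"
      unfolding openin_realization realization_open_def
    proof (intro conjI ballI)
      show "V \<subseteq> realization_set K" unfolding V_def by blast
      fix \<sigma> assume s: "\<sigma> \<in> K"
      show "openin (top_of_set (simplex_points \<sigma>)) (V \<inter> simplex_points \<sigma>)"
      proof (subst openin_subopen, intro ballI)
        fix x assume x: "x \<in> V \<inter> simplex_points \<sigma>"
        then have Nx: "N \<times> {x} \<subseteq> W \<inter> ({0..1} \<times> simplex_points \<sigma>)" unfolding V_def N_def by blast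
        have xt: "x \<in> topspace (top_of_set (simplex_points \<sigma>))" using x by simp
        obtain A' B' where "openin (top_of_set {0..1}) A'" and B': "openin (top_of_set (simplex_points \<sigma>)) B'"
          "N \<subseteq> A'" "x \<in> B'" "A' \<times> B' \<subseteq> W \<inter> ({0..1} \<times> simplex_points \<sigma>)"
          using tube_lemma_left[OF Ws[OF s] cN xt Nx] by blast
        have "B' \<subseteq> V \<inter> simplex_points \<sigma>"
          using B'(1,2,4) openin_subset[OF B'(1)] s unfolding V_def realization_set_def by fastforce
        then show "\<exists>T. openin (top_of_set (simplex_points \<sigma>)) T \<and> x \<in> T \<and> T \<subseteq> V \<inter> simplex_points \<sigma>"
          using B' by blast
      qed
    qed
    moreover have "s0 \<in> Oo" using s0I e unfolding Oo_def by auto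
    moreover have "x0 \<in> V"
      using NA AB(4,5) s0 unfolding V_def realization_set_def by blast
    moreover have "Oo \<times> V \<subseteq> W" unfolding Oo_def V_def N_def by auto
    ultimately show "\<exists>U V. openin (top_of_set {0..1}) U \<and> openin (realization K) V \<and> s0 \<in> U \<and> x0 \<in> V \<and> U \<times> V \<subseteq> W"
      by blast
  qed
qed





definition push :: "('a \<Rightarrow> 'b) \<Rightarrow> ('a \<Rightarrow> real) \<Rightarrow> ('b \<Rightarrow> real)" where
  "push f x = (\<lambda>b. \<Sum>a\<in>{a. x a \<noteq> 0 \<and> f a = b}. x a)"

lemma push_eq:
  assumes "finite \<sigma>" "x \<in> simplex_points \<sigma>"
  shows "push f x = (\<lambda>b. \<Sum>a\<in>{a\<in>\<sigma>. f a = b}. x a)"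
proof
  fix b
  have sub: "{a. x a \<noteq> 0 \<and> f a = b} \<subseteq> {a\<in>\<sigma>. f a = b}"
    using assms(2) unfolding simplex_points_def by auto
  show "push f x b = (\<Sum>a\<in>{a\<in>\<sigma>. f a = b}. x a)"
    unfolding push_def
    by (rule sum.mono_neutral_left) (use sub assms(1) in auto)
qed

lemma simplex_points_mono:
  assumes "\<sigma> \<subseteq> \<tau>" "finite \<tau>"
  shows "simplex_points \<sigma> \<subseteq> simplex_points \<tau>"
proof
  fix x assume x: "x \<in> simplex_points \<sigma>"
  have "sum x \<tau> = sum x \<sigma>"
    by (rule sum.mono_neutral_right) (use assms x in \<open>auto simp: simplex_points_def\<close>)
  then show "x \<in> simplex_points \<tau>" using x assms unfolding simplex_points_def by auto
qed

lemma push_simplex: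
  assumes "finite \<sigma>" "x \<in> simplex_points \<sigma>"
  shows "push f x \<in> simplex_points (f ` \<sigma>)"
proof -
  have pe: "push f x = (\<lambda>b. \<Sum>a\<in>{a\<in>\<sigma>. f a = b}. x a)" by (rule push_eq[OF assms])
  have nn: "\<forall>a. 0 \<le> x a" and z: "\<forall>a. a \<notin> \<sigma> \<longrightarrow> x a = 0" and s: "sum x \<sigma> = 1"
    using assms(2) unfolding simplex_points_def by auto
  have "\<forall>b. 0 \<le> push f x b" unfolding pe using nn by (auto intro: sum_nonneg)
  moreover have "\<forall>b. b \<notin> f ` \<sigma> \<longrightarrow> push f x b = 0"
  proof (intro allI impI)
    fix b assume "b \<notin> f ` \<sigma>"
    then have "{a\<in>\<sigma>. f a = b} = {}" by blast
    then show "push f x b = 0" unfolding pe by (simp only: sum.empty)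
  qed
  moreover have "sum (push f x) (f ` \<sigma>) = 1"
  proof -
    have "sum x \<sigma> = (\<Sum>b\<in>f ` \<sigma>. sum x {a\<in>\<sigma>. f a = b})" by (rule sum.image_gen[OF assms(1)])
    then show ?thesis using s unfolding pe by simp
  qed
  ultimately show ?thesis unfolding simplex_points_def mem_Collect_eq by (intro conjI)
qed



lemma coord_cont: "continuous_on S (\<lambda>x::'a \<Rightarrow> real. x a)"
  by (rule continuous_on_product_then_coordinatewise[where f="\<lambda>x. x", OF continuous_on_id])

lemma push_cont:
  assumes "finite \<sigma>"
  shows "continuous_on (simplex_points \<sigma>) (push f)"
proof -
  have c: "continuous_on (simplex_points \<sigma>) (\<lambda>x. (\<lambda>b. \<Sum>a\<in>{a\<in>\<sigma>. f a = b}. x a))"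
    by (rule continuous_on_coordinatewise_then_product, rule continuous_on_sum, rule coord_cont)
  show ?thesis
    by (rule continuous_on_cong[THEN iffD1, OF refl _ c]) (simp add: push_eq[OF assms])
qed

lemma nerve_subset:
  assumes "\<sigma> \<in> dowker_nerve \<Lambda> t" "\<tau> \<subseteq> \<sigma>"
  shows "\<tau> \<in> dowker_nerve \<Lambda> t"
  using assms unfolding dowker_nerve_def by (auto intro: finite_subset)

lemma nerve_empty: "{} \<in> dowker_nerve \<Lambda> t"
  unfolding dowker_nerve_def by auto

lemma nerve_mono: "s \<le> t \<Longrightarrow> dowker_nerve \<Lambda> s \<subseteq> dowker_nerve \<Lambda> t"
  unfolding dowker_nerve_def using less_le_trans by blast

lemma rips_mono: "s \<le> t \<Longrightarrow> rips \<Lambda> s \<subseteq> rips \<Lambda> t"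
  unfolding rips_def using nerve_mono by blast

lemma rips_finite: "\<sigma> \<in> rips \<Lambda> t \<Longrightarrow> finite \<sigma>"
  unfolding rips_def by blast

lemma rips_image:
  assumes i: "\<forall>t \<sigma>. \<sigma> \<in> dowker_nerve \<Lambda> t \<and> \<sigma> \<noteq> {} \<longrightarrow> C `` \<sigma> \<in> dowker_nerve \<Lambda>' (\<alpha> t)"
    and fC: "\<forall>a. (a, f a) \<in> C"
    and s: "\<sigma> \<in> rips \<Lambda> t"
  shows "f ` \<sigma> \<in> rips \<Lambda>' (\<alpha> t)"
  unfolding rips_def
proof (intro CollectI conjI allI impI)
  show "finite (f ` \<sigma>)" using rips_finite[OF s] by simp
  fix \<tau> assume t: "\<tau> \<subseteq> f ` \<sigma> \<and> card \<tau> \<le> 2"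
  then obtain \<rho> where r: "\<rho> \<subseteq> \<sigma>" "inj_on f \<rho>" "\<tau> = f ` \<rho>"
    using t subset_image_inj[of \<tau> f \<sigma>] by blast
  have "card \<rho> \<le> 2" using t card_image[OF r(2)] r(3) by simp
  then have rn: "\<rho> \<in> dowker_nerve \<Lambda> t" using s r(1) unfolding rips_def by blast
  show "\<tau> \<in> dowker_nerve \<Lambda>' (\<alpha> t)"
  proof (cases "\<rho> = {}")
    case True then show ?thesis using r nerve_empty by simp
  next
    case False
    then have "C `` \<rho> \<in> dowker_nerve \<Lambda>' (\<alpha> t)" using i rn by blast
    moreover have "\<tau> \<subseteq> C `` \<rho>" using r fC by auto
    ultimately show ?thesis by (rule nerve_subset)
  qed
qed


lemma rips_contig:
  assumes i: "\<forall>t \<sigma>. \<sigma> \<in> dowker_nerve \<Lambda> t \<and> \<sigma> \<noteq> {} \<longrightarrow> C `` \<sigma> \<in> dowker_nerve \<Lambda>' (\<alpha> t) \<and> C `` \<sigma> \<noteq> {}"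
    and ii: "\<forall>t \<tau>. \<tau> \<in> dowker_nerve \<Lambda>' t \<and> \<tau> \<noteq> {} \<longrightarrow> C' `` \<tau> \<in> dowker_nerve \<Lambda> (\<alpha>' t)"
    and idC: "Id \<subseteq> C O C'"
    and fC: "\<forall>a. (a, f a) \<in> C" and gC: "\<forall>b. (b, g b) \<in> C'"
    and s: "\<sigma> \<in> rips \<Lambda> t"
  shows "\<sigma> \<union> g ` f ` \<sigma> \<in> rips \<Lambda> (\<alpha>' (\<alpha> t))"
  unfolding rips_def
proof (intro CollectI conjI allI impI)
  have fs: "finite \<sigma>" using rips_finite[OF s] .
  then show "finite (\<sigma> \<union> g ` f ` \<sigma>)" by simp
  define \<phi> where "\<phi> = (\<lambda>(b::bool, a). if b then a else g (f a))"
  fix \<tau> assume t: "\<tau> \<subseteq> \<sigma> \<union> g ` f ` \<sigma> \<and> card \<tau> \<le> 2"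
  have "\<sigma> \<union> g ` f ` \<sigma> = \<phi> ` ({True,False} \<times> \<sigma>)"
  proof
    show "\<sigma> \<union> g ` f ` \<sigma> \<subseteq> \<phi> ` ({True,False} \<times> \<sigma>)"
    proof
      fix y assume "y \<in> \<sigma> \<union> g ` f ` \<sigma>"
      then consider "y \<in> \<sigma>" | a where "a \<in> \<sigma>" "y = g (f a)" by blast
      then show "y \<in> \<phi> ` ({True,False} \<times> \<sigma>)"
      proof cases
        case 1 then have "y = \<phi> (True, y)" unfolding \<phi>_def by simp
        then show ?thesis using 1 by blast
      next
        case 2 then have "y = \<phi> (False, a)" unfolding \<phi>_def by simp
        then show ?thesis using 2 by blast
      qed
    qed
    show "\<phi> ` ({True,False} \<times> \<sigma>) \<subseteq> \<sigma> \<union> g ` f ` \<sigma>"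
    proof
      fix y assume "y \<in> \<phi> ` ({True,False} \<times> \<sigma>)"
      then obtain p where p: "p \<in> {True,False} \<times> \<sigma>" "y = \<phi> p" by blast
      obtain b a where pba: "p = (b, a)" by (cases p)
      have a: "a \<in> \<sigma>" using p(1) pba by simp
      show "y \<in> \<sigma> \<union> g ` f ` \<sigma>"
      proof (cases b)
        case True then show ?thesis using a p(2) pba unfolding \<phi>_def by simp
      next
        case False then show ?thesis using a p(2) pba unfolding \<phi>_def by simp
      qed
    qed
  qed
  then obtain U where U: "U \<subseteq> {True,False} \<times> \<sigma>" "inj_on \<phi> U" "\<tau> = \<phi> ` U"
    using t subset_image_inj[THEN iffD1, of \<tau> \<phi> "{True,False} \<times> \<sigma>"] by (elim exE conjE) auto
  have "finite ({True,False} \<times> \<sigma>)" using fs by (intro finite_cartesian_product) auto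
  then have fU: "finite U" using U(1) finite_subset by blast
  define \<rho> where "\<rho> = snd ` U"
  have "card \<rho> \<le> card U" unfolding \<rho>_def using fU card_image_le by blast
  also have "card U = card \<tau>" using card_image[OF U(2)] U(3) by simp
  finally have "card \<rho> \<le> 2" using t by simp
  moreover have "\<rho> \<subseteq> \<sigma>" using U(1) unfolding \<rho>_def by auto
  ultimately have rn: "\<rho> \<in> dowker_nerve \<Lambda> t" using s unfolding rips_def by blast
  show "\<tau> \<in> dowker_nerve \<Lambda> (\<alpha>' (\<alpha> t))"
  proof (cases "\<rho> = {}")
    case True then show ?thesis using U nerve_empty unfolding \<rho>_def by simp
  next
    case False
    then have D1: "C `` \<rho> \<in> dowker_nerve \<Lambda>' (\<alpha> t) \<and> C `` \<rho> \<noteq> {}" using i rn by blast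
    then have D: "C' `` (C `` \<rho>) \<in> dowker_nerve \<Lambda> (\<alpha>' (\<alpha> t))" using ii by blast
    have "\<tau> \<subseteq> C' `` (C `` \<rho>)"
    proof
      fix y assume "y \<in> \<tau>"
      then have "y \<in> \<phi> ` U" using U(3) by simp
      then obtain p where p: "p \<in> U" "y = \<phi> p" by blast
      obtain b a where pba: "p = (b, a)" by (cases p)
      have ba: "(b, a) \<in> U" "y = \<phi> (b, a)" using p pba by simp_all
      have ar: "a \<in> \<rho>" unfolding \<rho>_def using ba(1) by (metis snd_conv image_eqI)
      show "y \<in> C' `` (C `` \<rho>)"
      proof (cases b)
        case True
        then have ya: "y = a" using ba unfolding \<phi>_def by simp
        have "(a, a) \<in> C O C'" using idC by (rule subsetD) simp
        then obtain m where m: "(a, m) \<in> C" "(m, a) \<in> C'" by (rule relcompE) simp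
        have "m \<in> C `` \<rho>" by (rule ImageI[OF m(1) ar])
        then show ?thesis unfolding ya by (rule ImageI[OF m(2)])
      next
        case False
        then have yg: "y = g (f a)" using ba unfolding \<phi>_def by simp
        have "f a \<in> C `` \<rho>" by (rule ImageI[OF spec[OF fC] ar])
        then show ?thesis unfolding yg by (rule ImageI[OF spec[OF gC]])
      qed
    qed
    then show ?thesis by (rule nerve_subset[OF D])
  qed
qed



lemma simplex_convex:
  assumes "u \<in> simplex_points \<tau>" "v \<in> simplex_points \<tau>" "0 \<le> s" "s \<le> (1::real)"
  shows "(\<lambda>a. (1 - s) * u a + s * v a) \<in> simplex_points \<tau>"
proof -
  have u: "\<forall>a. 0 \<le> u a" "\<forall>a. a \<notin> \<tau> \<longrightarrow> u a = 0" "sum u \<tau> = 1"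
    using assms(1) unfolding simplex_points_def by auto
  have v: "\<forall>a. 0 \<le> v a" "\<forall>a. a \<notin> \<tau> \<longrightarrow> v a = 0" "sum v \<tau> = 1"
    using assms(2) unfolding simplex_points_def by auto
  have "\<forall>a. 0 \<le> (1 - s) * u a + s * v a" using u(1) v(1) assms(3,4) by simp
  moreover have "\<forall>a. a \<notin> \<tau> \<longrightarrow> (1 - s) * u a + s * v a = 0" using u(2) v(2) by simp
  moreover have "(\<Sum>a\<in>\<tau>. (1 - s) * u a + s * v a) = 1"
    using u(3) v(3) by (simp add: sum.distrib flip: sum_distrib_left)
  ultimately show ?thesis unfolding simplex_points_def mem_Collect_eq by (intro conjI)
qed

definition hmap :: "('a \<Rightarrow> 'b) \<Rightarrow> ('b \<Rightarrow> 'a) \<Rightarrow> real \<times> ('a \<Rightarrow> real) \<Rightarrow> 'a \<Rightarrow> real" where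
  "hmap f g = (\<lambda>p. \<lambda>a. (1 - fst p) * push g (push f (snd p)) a + fst p * snd p a)"

lemma hmap_img:
  assumes "finite \<sigma>"
  shows "hmap f g ` ({0..1} \<times> simplex_points \<sigma>) \<subseteq> simplex_points (\<sigma> \<union> g ` f ` \<sigma>)"
proof
  fix y assume "y \<in> hmap f g ` ({0..1} \<times> simplex_points \<sigma>)"
  then obtain s x where sx: "s \<in> {0..1}" "x \<in> simplex_points \<sigma>" "y = hmap f g (s, x)" by blast
  have fin: "finite (\<sigma> \<union> g ` f ` \<sigma>)" using assms by simp
  have "push f x \<in> simplex_points (f ` \<sigma>)" by (rule push_simplex[OF assms sx(2)])
  then have "push g (push f x) \<in> simplex_points (g ` f ` \<sigma>)"
    by (rule push_simplex[rotated]) (use assms in simp)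
  then have a: "push g (push f x) \<in> simplex_points (\<sigma> \<union> g ` f ` \<sigma>)"
    using simplex_points_mono[OF _ fin, of "g ` f ` \<sigma>"] by blast
  have b: "x \<in> simplex_points (\<sigma> \<union> g ` f ` \<sigma>)"
    using simplex_points_mono[OF _ fin, of "\<sigma>"] sx(2) by blast
  show "y \<in> simplex_points (\<sigma> \<union> g ` f ` \<sigma>)"
    unfolding sx(3) hmap_def using simplex_convex[OF a b, of s] sx(1) by simp
qed

lemma hmap_cont:
  assumes "finite \<sigma>"
  shows "continuous_on ({0..1} \<times> simplex_points \<sigma>) (hmap f g)"
proof -
  let ?S = "{0..1::real} \<times> simplex_points \<sigma>"
  have c1: "continuous_on ?S (\<lambda>p. push f (snd p))"
    by (rule continuous_on_compose2[OF push_cont[OF assms] continuous_on_snd]) auto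
  have im: "(\<lambda>p. push f (snd p)) ` ?S \<subseteq> simplex_points (f ` \<sigma>)"
    using push_simplex[OF assms] by auto
  have c2: "continuous_on ?S (\<lambda>p. push g (push f (snd p)))"
    by (rule continuous_on_compose2[OF push_cont c1 im]) (use assms in simp)
  have c3: "continuous_on ?S (\<lambda>p. push g (push f (snd p)) a)" for a
    by (rule continuous_on_product_then_coordinatewise[OF c2])
  have c4: "continuous_on ?S (\<lambda>p. snd p a)" for a
    by (rule continuous_on_compose2[OF coord_cont continuous_on_snd]) auto
  show ?thesis unfolding hmap_def
    by (intro continuous_on_coordinatewise_then_product continuous_on_add continuous_on_mult
        continuous_on_diff continuous_on_const continuous_on_fst continuous_on_id c3 c4)
qed

lemma homotopy_part:
  assumes i: "\<forall>t \<sigma>. \<sigma> \<in> dowker_nerve \<Lambda> t \<and> \<sigma> \<noteq> {} \<longrightarrow> C `` \<sigma> \<in> dowker_nerve \<Lambda>' (\<alpha> t) \<and> C `` \<sigma> \<noteq> {}"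
    and ii: "\<forall>t \<tau>. \<tau> \<in> dowker_nerve \<Lambda>' t \<and> \<tau> \<noteq> {} \<longrightarrow> C' `` \<tau> \<in> dowker_nerve \<Lambda> (\<alpha>' t)"
    and idC: "Id \<subseteq> C O C'"
    and fC: "\<forall>a. (a, f a) \<in> C" and gC: "\<forall>b. (b, g b) \<in> C'"
  shows "homotopic_with (\<lambda>_. True) (realization (rips \<Lambda> t)) (realization (rips \<Lambda> (\<alpha>' (\<alpha> t))))
           (push g \<circ> push f) id"
  unfolding homotopic_with_def
proof (intro exI conjI)
  show "continuous_map (prod_topology (top_of_set {0..1}) (realization (rips \<Lambda> t)))
          (realization (rips \<Lambda> (\<alpha>' (\<alpha> t)))) (hmap f g)"
  proof (rule continuous_map_prod_realization)
    fix \<sigma> assume s: "\<sigma> \<in> rips \<Lambda> t"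
    have "\<sigma> \<union> g ` f ` \<sigma> \<in> rips \<Lambda> (\<alpha>' (\<alpha> t))" by (rule rips_contig[OF i ii idC fC gC s])
    then show "\<exists>\<tau>\<in>rips \<Lambda> (\<alpha>' (\<alpha> t)). hmap f g ` ({0..1} \<times> simplex_points \<sigma>) \<subseteq> simplex_points \<tau>"
      using hmap_img[OF rips_finite[OF s]] by blast
    show "continuous_on ({0..1} \<times> simplex_points \<sigma>) (hmap f g)"
      by (rule hmap_cont[OF rips_finite[OF s]])
  qed
  show "\<forall>x. hmap f g (0, x) = (push g \<circ> push f) x" by (simp add: hmap_def)
  show "\<forall>x. hmap f g (1, x) = id x" by (simp add: hmap_def)
  show "\<forall>t\<in>{0..1}. (\<lambda>_. True) (\<lambda>x. hmap f g (t, x))" by simp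
qed

theorem corollary7p15:
  fixes \<Lambda> :: "'l \<Rightarrow> 'w \<Rightarrow> ennreal" and \<Lambda>' :: "'l2 \<Rightarrow> 'w2 \<Rightarrow> ennreal"
    and \<alpha> \<alpha>' :: "ennreal \<Rightarrow> ennreal"
  assumes "mono \<alpha>" and "mono \<alpha>'" and "\<And>t. t \<le> \<alpha> t" and "\<And>t. t \<le> \<alpha>' t"
    and "dowker_interleaved \<Lambda> \<Lambda>' \<alpha> \<alpha>'"
  shows "filtered_interleaved (rips \<Lambda>) (rips \<Lambda>') \<alpha> \<alpha>'"
proof -
  obtain C C' where CC: "dowker_interleaving \<Lambda> \<Lambda>' \<alpha> \<alpha>' C C'"
    using assms(5) unfolding dowker_interleaved_def by blast
  have i: "\<forall>t \<sigma>. \<sigma> \<in> dowker_nerve \<Lambda> t \<and> \<sigma> \<noteq> {} \<longrightarrow> C `` \<sigma> \<in> dowker_nerve \<Lambda>' (\<alpha> t) \<and> C `` \<sigma> \<noteq> {}"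
    and ii: "\<forall>t \<tau>. \<tau> \<in> dowker_nerve \<Lambda>' t \<and> \<tau> \<noteq> {} \<longrightarrow> C' `` \<tau> \<in> dowker_nerve \<Lambda> (\<alpha>' t) \<and> C' `` \<tau> \<noteq> {}"
    and id1: "Id \<subseteq> C O C'" and id2: "Id \<subseteq> C' O C"
    using CC unfolding dowker_interleaving_def by blast+
  have i': "\<forall>t \<sigma>. \<sigma> \<in> dowker_nerve \<Lambda> t \<and> \<sigma> \<noteq> {} \<longrightarrow> C `` \<sigma> \<in> dowker_nerve \<Lambda>' (\<alpha> t)"
    using i by blast
  have ii': "\<forall>t \<tau>. \<tau> \<in> dowker_nerve \<Lambda>' t \<and> \<tau> \<noteq> {} \<longrightarrow> C' `` \<tau> \<in> dowker_nerve \<Lambda> (\<alpha>' t)"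
    using ii by blast
  define f where "f = (\<lambda>a. SOME m. (a, m) \<in> C)"
  define g where "g = (\<lambda>b. SOME l. (b, l) \<in> C')"
  have fC: "\<forall>a. (a, f a) \<in> C"
  proof
    fix a
    have "(a, a) \<in> C O C'" using id1 by (rule subsetD) simp
    then have "\<exists>m. (a, m) \<in> C" by blast
    then show "(a, f a) \<in> C" unfolding f_def by (rule someI_ex)
  qed
  have gC: "\<forall>b. (b, g b) \<in> C'"
  proof
    fix b
    have "(b, b) \<in> C' O C" using id2 by (rule subsetD) simp
    then have "\<exists>m. (b, m) \<in> C'" by blast
    then show "(b, g b) \<in> C'" unfolding g_def by (rule someI_ex)
  qed
  have Fc: "continuous_map (realization (rips \<Lambda> s)) (realization (rips \<Lambda>' (\<alpha> t))) (push f)"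
    if st: "s \<le> t" for s t
  proof (rule continuous_map_realization)
    fix \<sigma> assume s: "\<sigma> \<in> rips \<Lambda> s"
    have "f ` \<sigma> \<in> rips \<Lambda>' (\<alpha> s)" by (rule rips_image[OF i' fC s])
    moreover have "rips \<Lambda>' (\<alpha> s) \<subseteq> rips \<Lambda>' (\<alpha> t)"
      by (rule rips_mono) (use assms(1) st in \<open>simp add: mono_def\<close>)
    ultimately show "\<exists>\<tau>\<in>rips \<Lambda>' (\<alpha> t). push f ` simplex_points \<sigma> \<subseteq> simplex_points \<tau>"
      using push_simplex[OF rips_finite[OF s]] by blast
    show "continuous_on (simplex_points \<sigma>) (push f)" by (rule push_cont[OF rips_finite[OF s]])
  qed
  have Gc: "continuous_map (realization (rips \<Lambda>' s)) (realization (rips \<Lambda> (\<alpha>' t))) (push g)"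
    if st: "s \<le> t" for s t
  proof (rule continuous_map_realization)
    fix \<sigma> assume s: "\<sigma> \<in> rips \<Lambda>' s"
    have "g ` \<sigma> \<in> rips \<Lambda> (\<alpha>' s)" by (rule rips_image[OF ii' gC s])
    moreover have "rips \<Lambda> (\<alpha>' s) \<subseteq> rips \<Lambda> (\<alpha>' t)"
      by (rule rips_mono) (use assms(2) st in \<open>simp add: mono_def\<close>)
    ultimately show "\<exists>\<tau>\<in>rips \<Lambda> (\<alpha>' t). push g ` simplex_points \<sigma> \<subseteq> simplex_points \<tau>"
      using push_simplex[OF rips_finite[OF s]] by blast
    show "continuous_on (simplex_points \<sigma>) (push g)" by (rule push_cont[OF rips_finite[OF s]])
  qed
  show ?thesis
    unfolding filtered_interleaved_def
  proof (intro exI[of _ "\<lambda>t. push f"] exI[of _ "\<lambda>t. push g"] conjI allI impI)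
    fix t
    show "continuous_map (realization (rips \<Lambda> t)) (realization (rips \<Lambda>' (\<alpha> t))) (push f)"
      by (rule Fc) simp
    show "continuous_map (realization (rips \<Lambda>' t)) (realization (rips \<Lambda> (\<alpha>' t))) (push g)"
      by (rule Gc) simp
    show "homotopic_with (\<lambda>_. True) (realization (rips \<Lambda> t)) (realization (rips \<Lambda> (\<alpha>' (\<alpha> t))))
            (push g \<circ> push f) id"
      by (rule homotopy_part[OF i ii' id1 fC gC])
    show "homotopic_with (\<lambda>_. True) (realization (rips \<Lambda>' t)) (realization (rips \<Lambda>' (\<alpha> (\<alpha>' t))))
            (push f \<circ> push g) id"
      by (rule homotopy_part[OF ii i' id2 gC fC])
  next
    fix s t :: ennreal assume "s \<le> t"
    then show "homotopic_with (\<lambda>_. True) (realization (rips \<Lambda> s)) (realization (rips \<Lambda>' (\<alpha> t))) (push f) (push f)"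
      using Fc by simp
  next
    fix s t :: ennreal assume "s \<le> t"
    then show "homotopic_with (\<lambda>_. True) (realization (rips \<Lambda>' s)) (realization (rips \<Lambda> (\<alpha>' t))) (push g) (push g)"
      using Gc by simp
  qed
qed


end
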